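(* Let $0<\Delta\le1$ and $T=\frac{\lambda_1}{\Delta}\ln\frac{1}{\Delta}$, and use the quantizer $q_r$ with variable-length encoding. There exist constants $C_2,C_3>0$, independent of $P$ and of the feedback rates (and of $\Delta$), such that for all $P>0$ $$\mathbb{E}[r_{\rm loss}]\le\log_2\Big(1+C_2P\,2^{-\min\{R_{r,{\rm VLE},1},R_{r,{\rm VLE},2}\}}\Big)\le C_3P\,2^{-\min\{R_{r,{\rm VLE},1},R_{r,{\rm VLE},2}\}}.$$
   Context: $H_1,H_2$ are independent exponential random variables with means $\lambda_1\ge\lambda_2>0$ (density $e^{-x/\lambda_i}/\lambda_i$, $x>0$); $P>0$ is the total power. For $a\ge b\ge0$ with $a>0$ let $A(a,b)=\frac{2b}{\sqrt{(a+b)^2+4ab^2P}+a+b}$. Full-CSI maximum minimum rate: $r_{\max}=\log_2(1+PH_1A(H_1,H_2))$ if $H_1\ge H_2$ and $r_{\max}=\log_2(1+PH_2A(H_2,H_1))$ if $H_1<H_2$. Quantizer with $\Delta>0$, $T\ge0$: $q_r(x)=\lfloor x/\Delta\rfloor\Delta$ for $x\le T\Delta$, $q_r(x)=T\Delta$ for $x>T\Delta$. Let $a_i=q_r(H_i)$; if $a_1\ge a_2$ let $(s,w)=(1,2)$, otherwise $(s,w)=(2,1)$. $\alpha_q=A(a_s,a_w)$ if $a_1,a_2>0$, else $\alpha_q=0$. Adapted rates: $r_{s,q}=\log_2(1+P\alpha_qa_s)$, $r_{w,q}=\log_2\big(1+\frac{Pa_w(1-\alpha_q)}{Pa_w\alpha_q+1}\big)$.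 Rate loss: $r_{\rm loss}=r_{\max}-\min\{r_{1,q},r_{2,q}\}$. Variable-length encoding: the quantization index $n$ (with $q_r(x)=n\Delta$) is sent with the $n$-th binary string in the list $0,1,00,01,10,11,000,\dots$, of length $\lfloor\log_2(n+2)\rfloor$. The feedback rate of Receiver $i$ is the expected codeword length $R_{r,{\rm VLE},i}=\mathbb{E}[\ell(H_i)]$, where $\ell(x)=\lfloor\log_2(\lfloor x/\Delta\rfloor+2)\rfloor$ for $x\le T\Delta$ and $\ell(x)=\lfloor\log_2(T+2)\rfloor$ for $x>T\Delta$. *)

theory Defs
  imports "HOL-Probability.Probability"
begin

definition alphaA :: "real \<Rightarrow> real \<Rightarrow> real \<Rightarrow> real" where
  "alphaA P a b = 2 * b / (sqrt ((a + b)^2 + 4 * a * b^2 * P) + a + b)"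

definition r_max :: "real \<Rightarrow> real \<Rightarrow> real \<Rightarrow> real" where
  "r_max P h1 h2 = (if h1 \<ge> h2 then log 2 (1 + P * h1 * alphaA P h1 h2)
                    else log 2 (1 + P * h2 * alphaA P h2 h1))"

definition q_r :: "real \<Rightarrow> real \<Rightarrow> real \<Rightarrow> real" where
  "q_r Delta T x = (if x \<le> T * Delta then of_int \<lfloor>x / Delta\<rfloor> * Delta else T * Delta)"

definition min_rate_q :: "real \<Rightarrow> real \<Rightarrow> real \<Rightarrow> real \<Rightarrow> real \<Rightarrow> real" where
  "min_rate_q P Delta T h1 h2 =
     (let a1 = q_r Delta T h1; a2 = q_r Delta T h2;
          as = (if a1 \<ge> a2 then a1 else a2);
          aw = (if a1 \<ge> a2 then a2 else a1);
          \<alpha> = (if a1 > 0 \<and> a2 > 0 then alphaA P as aw else 0);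
          rs = log 2 (1 + P * \<alpha> * as);
          rw = log 2 (1 + P * aw * (1 - \<alpha>) / (P * aw * \<alpha> + 1))
      in min rs rw)"

definition r_loss :: "real \<Rightarrow> real \<Rightarrow> real \<Rightarrow> real \<Rightarrow> real \<Rightarrow> real" where
  "r_loss P Delta T h1 h2 = r_max P h1 h2 - min_rate_q P Delta T h1 h2"

definition vle_len :: "real \<Rightarrow> real \<Rightarrow> real \<Rightarrow> real" where
  "vle_len Delta T x = (if x \<le> T * Delta
      then of_int \<lfloor>log 2 (of_int \<lfloor>x / Delta\<rfloor> + 2)\<rfloor>
      else of_int \<lfloor>log 2 (T + 2)\<rfloor>)"

text \<open>Distribution of an exponential random variable with mean lam.\<close>
definition exp_dist :: "real \<Rightarrow> real measure" where
  "exp_dist lam = density lborel (exponential_density (1 / lam))"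

end

theory Submission imports Defs begin


definition gw :: "real \<Rightarrow> real \<Rightarrow> real \<Rightarrow> real" where
  "gw P a b = P * a * alphaA P a b"

lemma alphaA_eq:
  assumes "a > 0" "b > 0" "P > 0"
  shows "alphaA P a b * (a + b) + P * a * b * (alphaA P a b)^2 = b"
proof -
  define S where "S = sqrt ((a + b)^2 + 4 * a * b^2 * P)"
  have "4 * a * b^2 * P \<ge> 0" using assms by simp
  then have nn: "0 \<le> (a + b)^2 + 4 * a * b^2 * P" by (rule add_nonneg_nonneg[OF zero_le_power2])
  have S2: "S^2 = (a + b)^2 + 4 * a * b^2 * P" unfolding S_def using nn by simp
  have S0: "S \<ge> 0" unfolding S_def using nn by simp
  have pos: "S + a + b > 0" using S0 assms by linarith
  have al: "alphaA P a b = 2 * b / (S + a + b)" unfolding alphaA_def S_def by simp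
  define D where "D = S + a + b"
  define al where "al = alphaA P a b"
  have aD: "al * D = 2 * b" unfolding al_def alphaA_def D_def S_def[symmetric] using pos
    by (simp add: field_simps)
  have "(al * (a + b) + P * a * b * al^2) * D^2 = (a+b) * (al * D) * D + P * a * b * (al * D)^2"
    by (simp add: algebra_simps power2_eq_square)
  also have "\<dots> = (a+b) * (2*b) * (S + a + b) + P * a * b * (2*b)^2" unfolding aD by (simp add: D_def)
  also have "\<dots> = b * D^2" unfolding D_def using S2
    by (simp add: algebra_simps power2_eq_square power3_eq_cube)
  finally have "(al * (a + b) + P * a * b * al^2) * D^2 = b * D^2" .
  moreover have "D^2 > 0" using pos D_def by simp
  ultimately show ?thesis unfolding al_def by simp
qed

lemma gw_eq:
  assumes "a > 0" "b > 0" "P > 0"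
  shows "gw P a b * (a + b) + b * (gw P a b)^2 = P * a * b"
proof -
  have "gw P a b * (a + b) + b * (gw P a b)^2 = P * a * (alphaA P a b * (a + b) + P * a * b * (alphaA P a b)^2)"
    unfolding gw_def by (simp add: algebra_simps power2_eq_square)
  then show ?thesis using alphaA_eq[OF assms] by simp
qed

lemma alphaA_pos: "a > 0 \<Longrightarrow> b > 0 \<Longrightarrow> P > 0 \<Longrightarrow> alphaA P a b > 0"
  unfolding alphaA_def by (intro divide_pos_pos) (auto intro: add_nonneg_pos add_pos_pos)

lemma alphaA_le1: assumes "a > 0" "b > 0" "P > 0" shows "alphaA P a b \<le> 1"
proof -
  have "sqrt ((a + b)^2 + 4 * a * b^2 * P) \<ge> sqrt ((a+b)^2)" using assms
    by (intro real_sqrt_le_mono) simp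
  then have "sqrt ((a + b)^2 + 4 * a * b^2 * P) \<ge> a + b" using assms by simp
  then show ?thesis unfolding alphaA_def using assms by (simp add: divide_le_eq)
qed

lemma gw_pos: "a > 0 \<Longrightarrow> b > 0 \<Longrightarrow> P > 0 \<Longrightarrow> gw P a b > 0"
  unfolding gw_def using alphaA_pos by simp

lemma gw_le:
  assumes "a > 0" "b > 0" "P > 0"
  shows "gw P a b \<le> P * a" "gw P a b \<le> P * b"
proof -
  let ?w = "gw P a b"
  have e: "?w * (a + b) + b * ?w^2 = P * a * b" by (rule gw_eq[OF assms])
  have w0: "?w > 0" using gw_pos assms by simp
  have "b * ?w^2 \<ge> 0" using assms by simp
  then have s: "?w * (a + b) \<le> P * a * b" using e by linarith
  have "?w * b \<ge> 0" "?w * a \<ge> 0" using w0 assms by auto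
  then have "?w * a \<le> P * a * b" "?w * b \<le> P * a * b" using s by (simp_all add: algebra_simps)
  then have "a * ?w \<le> a * (P * b)" "b * ?w \<le> b * (P * a)" by (simp_all add: algebra_simps)
  then show "?w \<le> P * a" "?w \<le> P * b" using assms
    by (simp_all add: mult_le_cancel_left_pos mult.commute)
qed

lemma gw_compare:
  assumes a: "a > 0" "b > 0" "a' > 0" "b' > 0" "P > 0" "0 < c" "c \<le> 1"
    "c * a \<le> a'" "c * b \<le> b'"
  shows "c * gw P a b \<le> gw P a' b'"
proof (rule ccontr)
  let ?w = "gw P a b" and ?v = "gw P a' b'"
  assume "\<not> ?thesis" then have lt: "?v < c * ?w" by simp
  have e: "?w * (a + b) + b * ?w^2 = P * a * b" by (rule gw_eq) (use a in auto)
  have e': "?v * (a' + b') + b' * ?v^2 = P * a' * b'" by (rule gw_eq) (use a in auto)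
  have w0: "?w > 0" "?v > 0" using gw_pos a by auto
  have eq: "P / ?w = 1 / b + (1 + ?w) / a" using e w0 a
    by (simp add: field_simps power2_eq_square)
  have "1 / b' + (1 + c * ?w) / a' \<le> 1 / (c * b) + (1 + ?w) / (c * a)"
  proof (rule add_mono)
    show "1 / b' \<le> 1 / (c * b)" using a by (intro divide_left_mono) (auto)
    have "(1 + c * ?w) / a' \<le> (1 + ?w) / a'" using a w0
      by (intro divide_right_mono) (auto simp: mult_left_le_one_le)
    also have "\<dots> \<le> (1 + ?w) / (c * a)" using a w0
      by (intro divide_left_mono) auto
    finally show "(1 + c * ?w) / a' \<le> (1 + ?w) / (c * a)" .
  qed
  also have "\<dots> = (1 / c) * (1 / b + (1 + ?w) / a)" using a by (simp add: field_simps)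
  also have "\<dots> = P / (c * ?w)" unfolding eq[symmetric] by simp
  finally have ineq: "1 / b' + (1 + c * ?w) / a' \<le> P / (c * ?w)" .
  have "c * ?w * (a' + b') + b' * (c * ?w)^2 \<le> P * a' * b'"
  proof -
    have pos: "c * ?w * a' * b' > 0" using a w0 by simp
    have "(1 / b' + (1 + c * ?w) / a') * (c * ?w * a' * b') \<le> P / (c * ?w) * (c * ?w * a' * b')"
      using ineq pos by (intro mult_right_mono) auto
    moreover have "(1 / b' + (1 + c * ?w) / a') * (c * ?w * a' * b') = c * ?w * (a' + b') + b' * (c * ?w)^2"
      using a by (simp add: field_simps power2_eq_square)
    moreover have "P / (c * ?w) * (c * ?w * a' * b') = P * a' * b'"
      using a w0 by (simp add: field_simps)
    ultimately show ?thesis by simp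
  qed
  moreover have "?v * (a' + b') + b' * ?v^2 < c * ?w * (a' + b') + b' * (c * ?w)^2"
  proof -
    have "?v * (a' + b') < c * ?w * (a' + b')" using lt a by simp
    moreover have "?v^2 < (c*?w)^2" using lt w0 by (intro power_strict_mono) auto
    then have "b' * ?v^2 < b' * (c*?w)^2" using a by simp
    ultimately show ?thesis by simp
  qed
  ultimately show False using e' by simp
qed




lemma gw_zero2[simp]: "gw P a 0 = 0" unfolding gw_def alphaA_def by simp
lemma gw_zero1[simp]: "gw P 0 b = 0" unfolding gw_def by simp

lemma gw_nonneg: "a \<ge> 0 \<Longrightarrow> b \<ge> 0 \<Longrightarrow> P > 0 \<Longrightarrow> gw P a b \<ge> 0"
  using gw_pos[of a b P] by (cases "a = 0"; cases "b = 0") auto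

lemma loss_core:
  assumes P: "P > 0" and ab: "b \<ge> 0" "b \<le> a" and a': "0 \<le> a'" "a' \<le> a" and b': "0 \<le> b'" "b' \<le> b"
  shows "0 \<le> log 2 (1 + gw P a b) - log 2 (1 + gw P a' b')"
    and "log 2 (1 + gw P a b) - log 2 (1 + gw P a' b') \<le> log 2 (1 + P * ((a - a') + (b - b')))"
proof -
  let ?w = "gw P a b" and ?v = "gw P a' b'"
  have w0: "?w \<ge> 0" "?v \<ge> 0" using gw_nonneg P ab a' b' by auto
  have d0: "P * ((a - a') + (b - b')) \<ge> 0" using P a' b' by simp
  have main: "?v \<le> ?w \<and> 1 + ?w \<le> (1 + ?v) * (1 + P * ((a - a') + (b - b')))"
  proof (cases "b = 0")
    case True
    then have "b' = 0" using b' by simp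
    then show ?thesis using True d0 by simp
  next
    case False
    then have b0: "b > 0" using ab by simp
    then have a0: "a > 0" using ab by simp
    show ?thesis
    proof (cases "a' = 0 \<or> b' = 0")
      case True
      then have v: "?v = 0" by auto
      have pa: "P * a' \<le> P * a" and pb: "P * b' \<le> P * b" using P a' b' by simp_all
      have ex: "P * ((a - a') + (b - b')) = (P * a - P * a') + (P * b - P * b')" by (simp add: algebra_simps)
      have "?w \<le> P * ((a - a') + (b - b'))"
      proof (cases "a' = 0")
        case True
        then show ?thesis unfolding ex using gw_le[OF a0 b0 P] pb by simp
      next
        case False
        then have "b' = 0" using \<open>a' = 0 \<or> b' = 0\<close> by simp
        then show ?thesis unfolding ex using gw_le[OF a0 b0 P] pa by simp
      qed
      then show ?thesis using v w0 by simp
    next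
      case False
      then have a'0: "a' > 0" and b'0: "b' > 0" using a' b' by auto
      define c where "c = min (a' / a) (b' / b)"
      have c0: "c > 0" unfolding c_def using a'0 b'0 a0 b0 by simp
      have c1: "c \<le> 1" unfolding c_def using a' a0 by (simp add: min_le_iff_disj)
      have ca: "c * a \<le> a'" unfolding c_def using a0
        by (metis min.cobounded1 mult_right_mono less_le nonzero_eq_divide_eq times_divide_eq_left) 
      have cb: "c * b \<le> b'" unfolding c_def using b0
        by (metis min.cobounded2 mult_right_mono less_le nonzero_eq_divide_eq times_divide_eq_left)
      have cv: "c * ?w \<le> ?v" by (rule gw_compare) (use a0 b0 a'0 b'0 P c0 c1 ca cb in auto)
      have vw: "1 * ?v \<le> ?w" by (rule gw_compare) (use a0 b0 a'0 b'0 P a' b' in auto)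
      have key: "(1 - c) * ?w \<le> P * ((a - a') + (b - b'))"
      proof (cases "a' / a \<le> b' / b")
        case True
        then have "c = a' / a" unfolding c_def by simp
        then have "(1 - c) * ?w \<le> (1 - c) * (P * a)" using gw_le[OF a0 b0 P] c1
          by (intro mult_left_mono) auto
        also have "\<dots> = P * (a - a')" using \<open>c = a' / a\<close> a0 by (simp add: field_simps)
        finally have "(1 - c) * ?w \<le> P * (a - a')" .
        moreover have "P * (b - b') \<ge> 0" using b' P by simp
        moreover have "P * ((a - a') + (b - b')) = P * (a - a') + P * (b - b')" by (simp add: distrib_left)
        ultimately show ?thesis by linarith
      next
        case False
        then have "c = b' / b" unfolding c_def by simp
        then have "(1 - c) * ?w \<le> (1 - c) * (P * b)" using gw_le[OF a0 b0 P] c1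
          by (intro mult_left_mono) auto
        also have "\<dots> = P * (b - b')" using \<open>c = b' / b\<close> b0 by (simp add: field_simps)
        finally have "(1 - c) * ?w \<le> P * (b - b')" .
        moreover have "P * (a - a') \<ge> 0" using a' P by simp
        moreover have "P * ((a - a') + (b - b')) = P * (a - a') + P * (b - b')" by (simp add: distrib_left)
        ultimately show ?thesis by linarith
      qed
      have nn: "c * (1 - c) * ?w^2 \<ge> 0" using c0 c1 by simp
      have "(1 + c * ?w) * (1 + (1 - c) * ?w) = 1 + ?w + c * (1 - c) * ?w^2"
        by (simp add: algebra_simps power2_eq_square)
      then have "1 + ?w \<le> (1 + c * ?w) * (1 + (1 - c) * ?w)" using nn by linarith
      also have "\<dots> \<le> (1 + ?v) * (1 + P * ((a - a') + (b - b')))"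
        using cv key c0 c1 w0 by (intro mult_mono) auto
      finally show ?thesis using vw by simp
    qed
  qed
  have lv: "log 2 (1 + ?v) \<le> log 2 (1 + ?w)" using main w0 by simp
  then show "0 \<le> log 2 (1 + ?w) - log 2 (1 + ?v)" by simp
  have "log 2 (1 + ?w) \<le> log 2 ((1 + ?v) * (1 + P * ((a - a') + (b - b'))))"
    using main w0 d0 by simp
  also have "\<dots> = log 2 (1 + ?v) + log 2 (1 + P * ((a - a') + (b - b')))"
    using w0 d0 by (simp add: log_mult)
  finally show "log 2 (1 + ?w) - log 2 (1 + ?v) \<le> log 2 (1 + P * ((a - a') + (b - b')))" by simp
qed

lemma rmax_eq: "r_max P h1 h2 = log 2 (1 + (if h1 \<ge> h2 then gw P h1 h2 else gw P h2 h1))"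
  unfolding r_max_def gw_def by (simp add: mult.assoc)

lemma minrate_eq:
  assumes P: "P > 0" and a: "q_r Delta T h1 \<ge> 0" "q_r Delta T h2 \<ge> 0"
  shows "min_rate_q P Delta T h1 h2 =
    (let a1 = q_r Delta T h1; a2 = q_r Delta T h2 in
       log 2 (1 + (if a1 \<ge> a2 then gw P a1 a2 else gw P a2 a1)))"
proof -
  define a1 where "a1 = q_r Delta T h1"
  define a2 where "a2 = q_r Delta T h2"
  define as where "as = (if a1 \<ge> a2 then a1 else a2)"
  define aw where "aw = (if a1 \<ge> a2 then a2 else a1)"
  have g: "(if a1 \<ge> a2 then gw P a1 a2 else gw P a2 a1) = gw P as aw"
    unfolding as_def aw_def by simp
  have nn: "as \<ge> 0" "aw \<ge> 0" using a unfolding as_def aw_def a1_def a2_def by auto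
  have mr: "min_rate_q P Delta T h1 h2 =
     (let \<alpha> = (if a1 > 0 \<and> a2 > 0 then alphaA P as aw else 0)
      in min (log 2 (1 + P * \<alpha> * as)) (log 2 (1 + P * aw * (1 - \<alpha>) / (P * aw * \<alpha> + 1))))"
    unfolding min_rate_q_def a1_def a2_def as_def aw_def Let_def by simp
  show ?thesis
  proof (cases "a1 > 0 \<and> a2 > 0")
    case True
    then have p: "as > 0" "aw > 0" unfolding as_def aw_def by auto
    define al where "al = alphaA P as aw"
    have e: "al * (as + aw) + P * as * aw * al^2 = aw" unfolding al_def by (rule alphaA_eq[OF p P])
    have al0: "al > 0" unfolding al_def using alphaA_pos p P by simp
    have "(1 + P * al * as) * (P * aw * al + 1) = 1 + P * (al * (as + aw) + P * as * aw * al^2)"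
      by (simp add: algebra_simps power2_eq_square)
    also have "\<dots> = 1 + P * aw" using e by simp
    finally have f: "(1 + P * al * as) * (P * aw * al + 1) = 1 + P * aw" .
    have pos: "P * aw * al + 1 > 0" using P p al0 by (simp add: add_pos_pos)
    have "1 + P * aw * (1 - al) / (P * aw * al + 1) = (1 + P * aw) / (P * aw * al + 1)"
      using pos by (simp add: field_simps)
    also have "\<dots> = 1 + P * al * as" using f pos by (simp add: field_simps)
    finally have rw: "1 + P * aw * (1 - al) / (P * aw * al + 1) = 1 + P * al * as" .
    show ?thesis unfolding mr using True g rw
      by (simp add: Let_def al_def[symmetric] a1_def[symmetric] a2_def[symmetric] gw_def mult.commute mult.left_commute)
  next
    case False
    then have aw0: "aw = 0" using nn a unfolding as_def aw_def a1_def a2_def by auto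
    have al: "(if a1 > 0 \<and> a2 > 0 then alphaA P as aw else 0) = 0" using False by auto
    show ?thesis unfolding mr al using g aw0 False
      by (auto simp: Let_def a1_def[symmetric] a2_def[symmetric])
  qed
qed




lemma sets_exp_dist[measurable_cong]: "sets (exp_dist l) = sets borel"
  unfolding exp_dist_def by simp

lemma space_exp_dist[simp]: "space (exp_dist l) = UNIV"
  unfolding exp_dist_def by simp

lemma prob_exp_dist: "l > 0 \<Longrightarrow> prob_space (exp_dist l)"
  unfolding exp_dist_def by (rule prob_space_exponential_density) simp

lemma meas_alphaA[measurable (raw)]:
  assumes [measurable]: "f \<in> borel_measurable M" "g \<in> borel_measurable M"
  shows "(\<lambda>x. alphaA P (f x) (g x)) \<in> borel_measurable M"
  unfolding alphaA_def by measurable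
lemma meas_q[measurable (raw)]:
  assumes [measurable]: "f \<in> borel_measurable M"
  shows "(\<lambda>x. q_r Delta T (f x)) \<in> borel_measurable M"
  unfolding q_r_def by measurable
lemma meas_rmax[measurable (raw)]:
  assumes [measurable]: "f \<in> borel_measurable M" "g \<in> borel_measurable M"
  shows "(\<lambda>x. r_max P (f x) (g x)) \<in> borel_measurable M"
  unfolding r_max_def by measurable
lemma meas_mr[measurable (raw)]:
  assumes [measurable]: "f \<in> borel_measurable M" "g \<in> borel_measurable M"
  shows "(\<lambda>x. min_rate_q P Delta T (f x) (g x)) \<in> borel_measurable M"
  unfolding min_rate_q_def Let_def by measurable
lemma meas_rloss: "(\<lambda>(h1, h2). r_loss P Delta T h1 h2) \<in> borel_measurable (exp_dist l1 \<Otimes>\<^sub>M exp_dist l2)"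
  unfolding r_loss_def case_prod_beta by measurable
lemma meas_vle: "vle_len Delta T \<in> borel_measurable (exp_dist l)"
  unfolding vle_len_def by measurable

lemma AE_exp_nonneg: "AE x in exp_dist l. 0 \<le> x"
  unfolding exp_dist_def
  by (subst AE_density) (auto simp: exponential_density_def)

lemma tail_nn:
  assumes l: "l > 0" and t: "t \<ge> 0"
  shows "(\<integral>\<^sup>+ x. ennreal (exponential_density l x * max 0 (x - t)) \<partial>lborel) = ennreal (exp (- l * t) / l)"
proof -
  have "(\<integral>\<^sup>+ x. ennreal (exponential_density l x * max 0 (x - t)) \<partial>lborel)
      = ennreal \<bar>1\<bar> * (\<integral>\<^sup>+ x. ennreal (exponential_density l (t + 1 * x) * max 0 (t + 1 * x - t)) \<partial>lborel)"
    by (rule nn_integral_real_affine) auto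
  also have "\<dots> = (\<integral>\<^sup>+ x. ennreal (exponential_density l (t + x) * max 0 x) \<partial>lborel)"
    by simp
  also have "\<dots> = (\<integral>\<^sup>+ x. ennreal (exp (- l * t)) * ennreal (erlang_density 0 l x * x ^ 1) \<partial>lborel)"
    using t by (intro nn_integral_cong)
      (auto simp: erlang_density_def ennreal_mult'[symmetric] algebra_simps mult_exp_exp max_def)
  also have "\<dots> = ennreal (exp (- l * t)) * (\<integral>\<^sup>+ x. ennreal (erlang_density 0 l x * x ^ 1) \<partial>lborel)"
    by (rule nn_integral_cmult) simp
  also have "\<dots> = ennreal (exp (- l * t)) * ennreal (1 / l)"
    using nn_integral_erlang_ith_moment[OF l, of 0 1] by simp
  also have "\<dots> = ennreal (exp (- l * t) / l)"
    by (simp add: ennreal_mult'[symmetric])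
  finally show ?thesis .
qed

lemma tail_int:
  assumes l: "lam > 0" and t: "t \<ge> 0"
  shows "has_bochner_integral (exp_dist lam) (\<lambda>x. max 0 (x - t)) (lam * exp (- t / lam))"
proof (rule has_bochner_integral_nn_integral)
  show "(\<lambda>x. max 0 (x - t)) \<in> borel_measurable (exp_dist lam)" by measurable
  show "AE x in exp_dist lam. 0 \<le> max 0 (x - t)" by simp
  show "0 \<le> lam * exp (- t / lam)" using l by simp
  have "(\<integral>\<^sup>+ x. ennreal (max 0 (x - t)) \<partial>exp_dist lam)
      = (\<integral>\<^sup>+ x. ennreal (exponential_density (1/lam) x * max 0 (x - t)) \<partial>lborel)"
    unfolding exp_dist_def
  proof -
    have "(\<integral>\<^sup>+ x. ennreal (max 0 (x - t)) \<partial>density lborel (exponential_density (1 / lam)))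
      = (\<integral>\<^sup>+ x. ennreal (exponential_density (1 / lam) x) * ennreal (max 0 (x - t)) \<partial>lborel)"
      by (rule nn_integral_density) auto
    also have "\<dots> = (\<integral>\<^sup>+ x. ennreal (exponential_density (1/lam) x * max 0 (x - t)) \<partial>lborel)"
    proof (rule nn_integral_cong)
      fix x
      have "0 \<le> exponential_density (1/lam) x" by (rule exponential_density_nonneg) (use l in simp)
      then show "ennreal (exponential_density (1 / lam) x) * ennreal (max 0 (x - t)) =
          ennreal (exponential_density (1/lam) x * max 0 (x - t))"
        by (subst ennreal_mult) auto
    qed
    finally show "(\<integral>\<^sup>+ x. ennreal (max 0 (x - t)) \<partial>density lborel (exponential_density (1 / lam)))
      = (\<integral>\<^sup>+ x. ennreal (exponential_density (1/lam) x * max 0 (x - t)) \<partial>lborel)" .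
  qed
  also have "\<dots> = ennreal (lam * exp (- t / lam))"
    using tail_nn[of "1/lam" t] l t by (simp add: field_simps)
  finally show "(\<integral>\<^sup>+ x. ennreal (max 0 (x - t)) \<partial>exp_dist lam) = ennreal (lam * exp (- t / lam))" .
qed




lemma fl_le: "Delta > 0 \<Longrightarrow> of_int \<lfloor>x / Delta\<rfloor> * Delta \<le> x"
  by (metis of_int_floor_le mult_right_mono less_le nonzero_eq_divide_eq times_divide_eq_left divide_le_eq)

lemma fl_gt: "Delta > 0 \<Longrightarrow> x - of_int \<lfloor>x / Delta\<rfloor> * Delta < Delta"
proof -
  assume D: "Delta > 0"
  have "x / Delta < of_int \<lfloor>x / Delta\<rfloor> + 1" by linarith
  then have "x < (of_int \<lfloor>x / Delta\<rfloor> + 1) * Delta" using D by (simp add: divide_less_eq)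
  then show ?thesis by (simp add: algebra_simps)
qed

lemma fl_nonneg: "Delta > 0 \<Longrightarrow> x \<ge> 0 \<Longrightarrow> of_int \<lfloor>x / Delta\<rfloor> * Delta \<ge> (0::real)"
  by simp

lemma q_props:
  assumes D: "Delta > 0" and T: "T \<ge> 0" and x: "x \<ge> 0"
  shows "0 \<le> q_r Delta T x" "q_r Delta T x \<le> x" "x - q_r Delta T x \<le> Delta + max 0 (x - T * Delta)"
  using fl_le[OF D, of x] fl_gt[OF D, of x] D T x unfolding q_r_def by auto

lemma q_mono:
  assumes D: "Delta > 0" and T: "T \<ge> 0" and x: "x \<ge> 0" "x \<le> y"
  shows "q_r Delta T x \<le> q_r Delta T y"
proof -
  have "\<lfloor>x / Delta\<rfloor> \<le> \<lfloor>y / Delta\<rfloor>" using D x by (intro floor_mono divide_right_mono) auto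
  then have "of_int \<lfloor>x / Delta\<rfloor> * Delta \<le> of_int \<lfloor>y / Delta\<rfloor> * Delta" using D by simp
  then show ?thesis using fl_le[OF D, of x] x unfolding q_r_def by auto
qed

lemma rloss_bound:
  assumes P: "P > 0" and D: "Delta > 0" and T: "T \<ge> 0" and h: "h1 \<ge> 0" "h2 \<ge> 0"
  shows "0 \<le> r_loss P Delta T h1 h2"
    "r_loss P Delta T h1 h2 \<le> log 2 (1 + P * ((h1 - q_r Delta T h1) + (h2 - q_r Delta T h2)))"
proof -
  let ?q = "q_r Delta T"
  note q1 = q_props[OF D T h(1)] and q2 = q_props[OF D T h(2)]
  have "0 \<le> r_loss P Delta T h1 h2 \<and>
    r_loss P Delta T h1 h2 \<le> log 2 (1 + P * ((h1 - ?q h1) + (h2 - ?q h2)))"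
  proof (cases "h2 \<le> h1")
    case True
    then have qq: "?q h2 \<le> ?q h1" using q_mono[OF D T h(2) True] by simp
    have e: "r_loss P Delta T h1 h2 = log 2 (1 + gw P h1 h2) - log 2 (1 + gw P (?q h1) (?q h2))"
      unfolding r_loss_def rmax_eq minrate_eq[OF P q1(1) q2(1)] using True qq by (simp add: Let_def)
    show ?thesis unfolding e using loss_core[OF P h(2) True q1(1) q1(2) q2(1) q2(2)] by simp
  next
    case False
    then have le: "h1 \<le> h2" by simp
    then have qq: "?q h1 \<le> ?q h2" using q_mono[OF D T h(1) le] by simp
    have g: "(if ?q h2 \<le> ?q h1 then gw P (?q h1) (?q h2) else gw P (?q h2) (?q h1)) = gw P (?q h2) (?q h1)"
      using qq by auto
    have e: "r_loss P Delta T h1 h2 = log 2 (1 + gw P h2 h1) - log 2 (1 + gw P (?q h2) (?q h1))"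
      unfolding r_loss_def rmax_eq minrate_eq[OF P q1(1) q2(1)] Let_def g using False by simp
    show ?thesis unfolding e using loss_core[OF P h(1) le q2(1) q2(2) q1(1) q1(2)] by (simp add: add.commute)
  qed
  then show "0 \<le> r_loss P Delta T h1 h2"
    "r_loss P Delta T h1 h2 \<le> log 2 (1 + P * ((h1 - ?q h1) + (h2 - ?q h2)))" by auto
qed

lemma vle_bound:
  assumes D: "Delta > 0" and T: "T \<ge> 0" and x: "x \<ge> 0"
  shows "0 \<le> vle_len Delta T x" "vle_len Delta T x \<le> log 2 (x / Delta + 2)"
proof -
  have xd: "x / Delta \<ge> 0" using D x by simp
  show "0 \<le> vle_len Delta T x"
  proof (cases "x \<le> T * Delta")
    case True
    have "0 \<le> \<lfloor>x / Delta\<rfloor>" using xd by simp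
    then have "1 \<le> real_of_int \<lfloor>x / Delta\<rfloor> + 2" by simp
    then have "log 2 (of_int \<lfloor>x / Delta\<rfloor> + 2) \<ge> 0" by simp
    then show ?thesis using True unfolding vle_len_def by simp
  next
    case False
    have "log 2 (T + 2) \<ge> 0" using T by simp
    then show ?thesis using False unfolding vle_len_def by simp
  qed
  show "vle_len Delta T x \<le> log 2 (x / Delta + 2)"
  proof (cases "x \<le> T * Delta")
    case True
    have "of_int \<lfloor>x / Delta\<rfloor> \<le> x / Delta" by (rule of_int_floor_le)
    moreover have "of_int \<lfloor>x / Delta\<rfloor> \<ge> (0::real)" using xd by simp
    ultimately have "log 2 (of_int \<lfloor>x / Delta\<rfloor> + 2) \<le> log 2 (x / Delta + 2)"
      by (intro log_mono) linarith+
    moreover have "of_int \<lfloor>log 2 (of_int \<lfloor>x / Delta\<rfloor> + 2)\<rfloor> \<le> log 2 (of_int \<lfloor>x / Delta\<rfloor> + 2)"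
      by (rule of_int_floor_le)
    moreover have "vle_len Delta T x = of_int \<lfloor>log 2 (of_int \<lfloor>x / Delta\<rfloor> + 2)\<rfloor>"
      using True unfolding vle_len_def by simp
    ultimately show ?thesis by linarith
  next
    case False
    then have "T < x / Delta" using D by (simp add: less_divide_eq)
    then have "log 2 (T + 2) \<le> log 2 (x / Delta + 2)" using T by simp
    moreover have "of_int \<lfloor>log 2 (T + 2)\<rfloor> \<le> log 2 (T + 2)" by (rule of_int_floor_le)
    moreover have "vle_len Delta T x = of_int \<lfloor>log 2 (T + 2)\<rfloor>"
      using False unfolding vle_len_def by simp
    ultimately show ?thesis by linarith
  qed
qed

lemma log_tangent:
  assumes "y > 0" "c > 0"
  shows "log 2 y \<le> log 2 c + (y - c) / (c * ln 2)"
proof -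
  have "ln (y / c) \<le> y / c - 1" using assms by (intro ln_le_minus_one) simp
  then have "ln y - ln c \<le> (y - c) / c" using assms by (simp add: ln_div diff_divide_distrib)
  then have "(ln y - ln c) / ln 2 \<le> ((y - c) / c) / ln 2" by (intro divide_right_mono) simp_all
  also have "((y - c) / c) / ln 2 = (y - c) / (c * ln 2)" by simp
  finally show ?thesis by (simp add: log_def diff_divide_distrib)
qed




lemma distr_pair_snd':
  assumes "prob_space M1" "prob_space M2"
  shows "distr (M1 \<Otimes>\<^sub>M M2) M2 snd = M2"
proof (intro measure_eqI)
  interpret p1: prob_space M1 by fact
  interpret p2: prob_space M2 by fact
  fix A assume A: "A \<in> sets (distr (M1 \<Otimes>\<^sub>M M2) M2 snd)"
  from A have "emeasure (distr (M1 \<Otimes>\<^sub>M M2) M2 snd) A = emeasure (M1 \<Otimes>\<^sub>M M2) (space M1 \<times> A)"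
    by (auto simp add: emeasure_distr space_pair_measure dest: sets.sets_into_space intro!: arg_cong2[where f=emeasure])
  with A show "emeasure (distr (M1 \<Otimes>\<^sub>M M2) M2 snd) A = emeasure M2 A"
    by (simp add: p2.emeasure_pair_measure_Times p1.emeasure_space_1)
qed simp

lemma pair_fst_int:
  fixes f :: "'a \<Rightarrow> real"
  assumes "prob_space M1" "prob_space M2" "integrable M1 f"
  shows "integrable (M1 \<Otimes>\<^sub>M M2) (\<lambda>z. f (fst z))" "integral\<^sup>L (M1 \<Otimes>\<^sub>M M2) (\<lambda>z. f (fst z)) = integral\<^sup>L M1 f"
proof -
  interpret p2: prob_space M2 by fact
  have e: "distr (M1 \<Otimes>\<^sub>M M2) M1 fst = M1" by (rule p2.distr_pair_fst)
  have fm: "f \<in> borel_measurable M1" using assms(3) by auto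
  show "integrable (M1 \<Otimes>\<^sub>M M2) (\<lambda>z. f (fst z))"
    using integrable_distr_eq[of fst "M1 \<Otimes>\<^sub>M M2" M1 f] fm assms(3) e by simp
  show "integral\<^sup>L (M1 \<Otimes>\<^sub>M M2) (\<lambda>z. f (fst z)) = integral\<^sup>L M1 f"
    using integral_distr[of fst "M1 \<Otimes>\<^sub>M M2" M1 f] fm e by simp
qed

lemma pair_snd_int:
  fixes f :: "'a \<Rightarrow> real"
  assumes "prob_space M1" "prob_space M2" "integrable M2 f"
  shows "integrable (M1 \<Otimes>\<^sub>M M2) (\<lambda>z. f (snd z))" "integral\<^sup>L (M1 \<Otimes>\<^sub>M M2) (\<lambda>z. f (snd z)) = integral\<^sup>L M2 f"
proof -
  have e: "distr (M1 \<Otimes>\<^sub>M M2) M2 snd = M2" by (rule distr_pair_snd'[OF assms(1,2)])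
  have fm: "f \<in> borel_measurable M2" using assms(3) by auto
  show "integrable (M1 \<Otimes>\<^sub>M M2) (\<lambda>z. f (snd z))"
    using integrable_distr_eq[of snd "M1 \<Otimes>\<^sub>M M2" M2 f] fm assms(3) e by simp
  show "integral\<^sup>L (M1 \<Otimes>\<^sub>M M2) (\<lambda>z. f (snd z)) = integral\<^sup>L M2 f"
    using integral_distr[of snd "M1 \<Otimes>\<^sub>M M2" M2 f] fm e by simp
qed

lemma pair_AE:
  assumes "prob_space M1" "prob_space M2" "AE x in M1. P x" "AE y in M2. Q y"
  shows "AE z in M1 \<Otimes>\<^sub>M M2. P (fst z) \<and> Q (snd z)"
proof -
  interpret p2: prob_space M2 by fact
  have e1: "distr (M1 \<Otimes>\<^sub>M M2) M1 fst = M1" by (rule p2.distr_pair_fst)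
  have e2: "distr (M1 \<Otimes>\<^sub>M M2) M2 snd = M2" by (rule distr_pair_snd'[OF assms(1,2)])
  have "AE z in M1 \<Otimes>\<^sub>M M2. P (fst z)"
    by (rule AE_distrD[OF measurable_fst]) (subst e1, rule assms(3))
  moreover have "AE z in M1 \<Otimes>\<^sub>M M2. Q (snd z)"
    by (rule AE_distrD[OF measurable_snd]) (subst e2, rule assms(4))
  ultimately show ?thesis by eventually_elim auto
qed

lemma vle_int:
  assumes lam: "lam > 0" and D: "Delta > 0" and T: "T \<ge> 0"
  shows "integrable (exp_dist lam) (vle_len Delta T)"
    "integral\<^sup>L (exp_dist lam) (vle_len Delta T) \<le> log 2 (lam / Delta + 2)"
proof -
  interpret p: prob_space "exp_dist lam" by (rule prob_exp_dist[OF lam])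
  have hm: "has_bochner_integral (exp_dist lam) (\<lambda>x. max 0 x) lam"
    using tail_int[OF lam, of 0] by simp
  define c where "c = lam / Delta + 2"
  have c0: "c > 0" unfolding c_def using lam D by (simp add: add_pos_pos)
  define k where "k = log 2 c + (2 - c) / (c * ln 2)"
  define B where "B = (\<lambda>x. k + max 0 x * (1 / (Delta * c * ln 2)))"
  have hB: "has_bochner_integral (exp_dist lam) B (k + lam * (1 / (Delta * c * ln 2)))"
    unfolding B_def
    by (intro has_bochner_integral_add has_bochner_integral_mult_left hm)
       (simp add: has_bochner_integral_iff p.prob_space[unfolded space_exp_dist])
  have Bint: "integrable (exp_dist lam) B" using hB by (rule integrable.intros)
  have IB: "integral\<^sup>L (exp_dist lam) B = log 2 c"
  proof -
    have "integral\<^sup>L (exp_dist lam) B = k + lam * (1 / (Delta * c * ln 2))"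
      using hB by (rule has_bochner_integral_integral_eq)
    also have "\<dots> = log 2 c + ((2 - c) + lam / Delta) / (c * ln 2)"
      unfolding k_def using D c0 by (simp add: field_simps)
    also have "(2 - c) + lam / Delta = 0" unfolding c_def by simp
    finally show ?thesis by simp
  qed
  have AEb: "AE x in exp_dist lam. 0 \<le> vle_len Delta T x \<and> vle_len Delta T x \<le> B x"
    using AE_exp_nonneg
  proof eventually_elim
    case (elim x)
    note vb = vle_bound[OF D T elim]
    have "log 2 (x / Delta + 2) \<le> log 2 c + (x / Delta + 2 - c) / (c * ln 2)"
      by (rule log_tangent) (use elim D c0 in \<open>auto intro: add_nonneg_pos\<close>)
    also have "\<dots> = B x" unfolding B_def k_def using elim D c0 by (simp add: field_simps)
    finally show ?case using vb by simp
  qed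
  show vi: "integrable (exp_dist lam) (vle_len Delta T)"
    by (rule Bochner_Integration.integrable_bound[OF Bint meas_vle]) (use AEb in \<open>eventually_elim, auto\<close>)
  have "integral\<^sup>L (exp_dist lam) (vle_len Delta T) \<le> integral\<^sup>L (exp_dist lam) B"
    by (rule integral_mono_AE[OF vi Bint]) (use AEb in \<open>eventually_elim, auto\<close>)
  then show "integral\<^sup>L (exp_dist lam) (vle_len Delta T) \<le> log 2 (lam / Delta + 2)"
    using IB c_def by simp
qed

lemma d_int:
  assumes lam: "lam > 0" and D: "Delta > 0" and T: "T \<ge> 0"
  shows "integrable (exp_dist lam) (\<lambda>x. x - q_r Delta T x)"
    "integral\<^sup>L (exp_dist lam) (\<lambda>x. x - q_r Delta T x) \<le> Delta + lam * exp (- (T * Delta) / lam)"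
    "AE x in exp_dist lam. 0 \<le> x - q_r Delta T x"
proof -
  interpret p: prob_space "exp_dist lam" by (rule prob_exp_dist[OF lam])
  have t0: "T * Delta \<ge> 0" using T D by simp
  have hB: "has_bochner_integral (exp_dist lam) (\<lambda>x. Delta + max 0 (x - T * Delta)) (Delta + lam * exp (- (T * Delta) / lam))"
    by (intro has_bochner_integral_add tail_int[OF lam t0])
       (simp add: has_bochner_integral_iff p.prob_space[unfolded space_exp_dist])
  have Bint: "integrable (exp_dist lam) (\<lambda>x. Delta + max 0 (x - T * Delta))"
    using hB by (rule integrable.intros)
  have AEb: "AE x in exp_dist lam. 0 \<le> x - q_r Delta T x \<and> x - q_r Delta T x \<le> Delta + max 0 (x - T * Delta)"
    using AE_exp_nonneg
  proof eventually_elim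
    case (elim x)
    then show ?case using q_props[OF D T elim] by simp
  qed
  then show "AE x in exp_dist lam. 0 \<le> x - q_r Delta T x" by auto
  have meas: "(\<lambda>x. x - q_r Delta T x) \<in> borel_measurable (exp_dist lam)"
    unfolding q_r_def by measurable
  show vi: "integrable (exp_dist lam) (\<lambda>x. x - q_r Delta T x)"
    by (rule Bochner_Integration.integrable_bound[OF Bint meas]) (use AEb in \<open>eventually_elim, insert D, auto\<close>)
  have "integral\<^sup>L (exp_dist lam) (\<lambda>x. x - q_r Delta T x) \<le> integral\<^sup>L (exp_dist lam) (\<lambda>x. Delta + max 0 (x - T * Delta))"
    by (rule integral_mono_AE[OF vi Bint]) (use AEb in \<open>eventually_elim, auto\<close>)
  then show "integral\<^sup>L (exp_dist lam) (\<lambda>x. x - q_r Delta T x) \<le> Delta + lam * exp (- (T * Delta) / lam)"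
    using has_bochner_integral_integral_eq[OF hB] by simp
qed




theorem theorem2:
  fixes lam1 lam2 :: real
  assumes "lam1 \<ge> lam2" and "lam2 > 0"
  shows "\<exists>C2 C3. C2 > 0 \<and> C3 > 0 \<and>
    (\<forall>Delta P. 0 < Delta \<and> Delta \<le> 1 \<and> P > 0 \<longrightarrow>
      (let T = lam1 / Delta * ln (1 / Delta);
           R1 = integral\<^sup>L (exp_dist lam1) (vle_len Delta T);
           R2 = integral\<^sup>L (exp_dist lam2) (vle_len Delta T);
           M = exp_dist lam1 \<Otimes>\<^sub>M exp_dist lam2;
           L = (\<lambda>(h1, h2). r_loss P Delta T h1 h2)
       in integrable (exp_dist lam1) (vle_len Delta T) \<and>
          integrable (exp_dist lam2) (vle_len Delta T) \<and>
          integrable M L \<and>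
          integral\<^sup>L M L \<le> log 2 (1 + C2 * P * 2 powr (- min R1 R2)) \<and>
          log 2 (1 + C2 * P * 2 powr (- min R1 R2)) \<le> C3 * P * 2 powr (- min R1 R2)))"
proof -
  have l2: "lam2 > 0" by fact
  have l1: "lam1 > 0" using assms by simp
  define C2 where "C2 = (2 + lam1 + lam2) * (lam1 + 2)"
  define C3 where "C3 = C2 / ln 2"
  have C2p: "C2 > 0" unfolding C2_def using l1 l2 by simp
  have C3p: "C3 > 0" unfolding C3_def using C2p by simp
  have main: "(let T = lam1 / Delta * ln (1 / Delta);
           R1 = integral\<^sup>L (exp_dist lam1) (vle_len Delta T);
           R2 = integral\<^sup>L (exp_dist lam2) (vle_len Delta T);
           M = exp_dist lam1 \<Otimes>\<^sub>M exp_dist lam2;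
           L = (\<lambda>(h1, h2). r_loss P Delta T h1 h2)
       in integrable (exp_dist lam1) (vle_len Delta T) \<and>
          integrable (exp_dist lam2) (vle_len Delta T) \<and>
          integrable M L \<and>
          integral\<^sup>L M L \<le> log 2 (1 + C2 * P * 2 powr (- min R1 R2)) \<and>
          log 2 (1 + C2 * P * 2 powr (- min R1 R2)) \<le> C3 * P * 2 powr (- min R1 R2))"
    if D0: "0 < Delta" and D1: "Delta \<le> 1" and P0: "P > 0" for Delta P
  proof -
    define T where "T = lam1 / Delta * ln (1 / Delta)"
    have lnD: "ln (1 / Delta) \<ge> 0" using D0 D1 by simp
    have T0: "T \<ge> 0" unfolding T_def using l1 D0 lnD by simp
    define t where "t = T * Delta"
    have t_eq: "t = lam1 * ln (1 / Delta)" unfolding t_def T_def using D0 by simp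
    have t0: "t \<ge> 0" using t_eq l1 lnD by simp
    have e1: "exp (- t / lam1) = Delta"
      using t_eq l1 D0 by (simp add: exp_minus ln_div)
    have e2: "exp (- t / lam2) \<le> Delta"
    proof -
      have "t / lam1 \<le> t / lam2" using t0 l2 assms(1) by (intro divide_left_mono) auto
      then have "- (t / lam2) \<le> - (t / lam1)" by simp
      then have "exp (- t / lam2) \<le> exp (- t / lam1)" by simp
      then show ?thesis using e1 by linarith
    qed
    define M where "M = exp_dist lam1 \<Otimes>\<^sub>M exp_dist lam2"
    have p1: "prob_space (exp_dist lam1)" by (rule prob_exp_dist[OF l1])
    have p2: "prob_space (exp_dist lam2)" by (rule prob_exp_dist[OF l2])
    interpret pp: pair_prob_space "exp_dist lam1" "exp_dist lam2"
      by (intro pair_prob_space.intro pair_sigma_finite.intro p1 p2 prob_space_imp_sigma_finite)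
    note v1 = vle_int[OF l1 D0 T0] and v2 = vle_int[OF l2 D0 T0]
    define R1 where "R1 = integral\<^sup>L (exp_dist lam1) (vle_len Delta T)"
    define R2 where "R2 = integral\<^sup>L (exp_dist lam2) (vle_len Delta T)"
    define d where "d = (\<lambda>x. x - q_r Delta T x)"
    note d1 = d_int[OF l1 D0 T0, folded d_def t_def] and d2 = d_int[OF l2 D0 T0, folded d_def t_def]
    define dd where "dd = (\<lambda>z. d (fst z) + d (snd z))"
    have ddi: "integrable M dd" unfolding dd_def M_def
      by (intro Bochner_Integration.integrable_add pair_fst_int(1)[OF p1 p2 d1(1)] pair_snd_int(1)[OF p1 p2 d2(1)])
    define m where "m = integral\<^sup>L M dd"
    have m_eq: "m = integral\<^sup>L (exp_dist lam1) d + integral\<^sup>L (exp_dist lam2) d"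
      unfolding m_def dd_def M_def
      by (subst Bochner_Integration.integral_add)
         (simp_all add: pair_fst_int[OF p1 p2 d1(1)] pair_snd_int[OF p1 p2 d2(1)])
    have AEM: "AE z in M. 0 \<le> fst z \<and> 0 \<le> snd z" unfolding M_def
      by (rule pair_AE[OF p1 p2 AE_exp_nonneg AE_exp_nonneg])
    have AEd: "AE z in M. 0 \<le> dd z" unfolding M_def dd_def
      using pair_AE[OF p1 p2 d1(3) d2(3)] by eventually_elim (simp add: d_def)
    have m0: "m \<ge> 0" unfolding m_def by (rule integral_nonneg_AE[OF AEd])
    have mle: "m \<le> Delta * (2 + lam1 + lam2)"
    proof -
      have "m \<le> (Delta + lam1 * exp (- t / lam1)) + (Delta + lam2 * exp (- t / lam2))"
        unfolding m_eq using d1(2) d2(2) by linarith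
      also have "\<dots> \<le> (Delta + lam1 * Delta) + (Delta + lam2 * Delta)"
        using e1 e2 l2 by (simp add: mult_left_mono)
      finally show ?thesis by (simp add: algebra_simps)
    qed
    define L where "L = (\<lambda>(h1, h2). r_loss P Delta T h1 h2)"
    have Lm: "L \<in> borel_measurable M" unfolding L_def M_def by (rule meas_rloss)
    define c where "c = 1 + P * m"
    have c1: "c \<ge> 1" unfolding c_def using P0 m0 by simp
    define B where "B = (\<lambda>z. (log 2 c - P * m / (c * ln 2)) + dd z * (P / (c * ln 2)))"
    have Ms: "measure M (space M) = 1" unfolding M_def by (rule pp.prob_space)
    have Mc: "integrable M (\<lambda>x. k0)" "integral\<^sup>L M (\<lambda>x. k0) = k0" for k0 :: real
    proof -
      show "integrable M (\<lambda>x. k0)" unfolding M_def by simp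
      have "integral\<^sup>L M (\<lambda>x. k0) = measure M (space M) *\<^sub>R k0" by (rule lebesgue_integral_const)
      then show "integral\<^sup>L M (\<lambda>x. k0) = k0" using Ms by simp
    qed
    have Bi: "integrable M B" unfolding B_def
      by (intro Bochner_Integration.integrable_add integrable_mult_left ddi Mc)
    have IB: "integral\<^sup>L M B = log 2 c" unfolding B_def
      by (subst Bochner_Integration.integral_add)
         (use ddi Mc(1) Ms in \<open>simp_all add: m_def[symmetric] field_simps\<close>)
    have AEL: "AE z in M. 0 \<le> L z \<and> L z \<le> B z"
      using AEM AEd
    proof eventually_elim
      case (elim z)
      obtain h1 h2 where z: "z = (h1, h2)" by (cases z)
      have h: "h1 \<ge> 0" "h2 \<ge> 0" using elim z by auto
      note rb = rloss_bound[OF P0 D0 T0 h]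
      have Lz: "L z = r_loss P Delta T h1 h2" unfolding L_def z by simp
      have ddz: "dd z = (h1 - q_r Delta T h1) + (h2 - q_r Delta T h2)" unfolding dd_def d_def z by simp
      have "log 2 (1 + P * dd z) \<le> log 2 c + (1 + P * dd z - c) / (c * ln 2)"
        by (rule log_tangent) (use elim P0 c1 in \<open>auto intro: add_pos_nonneg\<close>)
      also have "\<dots> = B z"
      proof -
        have cl: "c * ln 2 \<noteq> 0" using c1 by simp
        have "1 + P * dd z - c = P * dd z - P * m" unfolding c_def by simp
        then show ?thesis unfolding B_def using cl by (simp add: field_simps)
      qed
      finally show ?case using rb Lz ddz by simp
    qed
    have Li: "integrable M L"
      by (rule Bochner_Integration.integrable_bound[OF Bi Lm]) (use AEL in \<open>eventually_elim, auto\<close>)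
    have IL: "integral\<^sup>L M L \<le> log 2 c"
      using integral_mono_AE[OF Li Bi] AEL IB by (auto elim: eventually_mono)
    define K where "K = 2 powr (- min R1 R2)"
    have K: "Delta / (lam1 + 2) \<le> K"
    proof -
      have "min R1 R2 \<le> log 2 (lam1 / Delta + 2)" using v1(2) R1_def by linarith
      then have "2 powr (- log 2 (lam1 / Delta + 2)) \<le> K" unfolding K_def by (intro powr_mono) auto
      moreover have "2 powr (- log 2 (lam1 / Delta + 2)) = 1 / (lam1 / Delta + 2)"
        using l1 D0 by (simp add: powr_minus add_pos_pos powr_log_cancel divide_inverse)
      moreover have "Delta / (lam1 + 2) \<le> 1 / (lam1 / Delta + 2)"
        using l1 D0 D1 by (simp add: field_simps)
      ultimately show ?thesis by simp
    qed
    have K0: "K > 0" unfolding K_def by simp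
    have Pm: "P * m \<le> C2 * P * K"
    proof -
      have "P * m \<le> P * (Delta * (2 + lam1 + lam2))" using mle P0 by simp
      also have "\<dots> = P * (2 + lam1 + lam2) * (lam1 + 2) * (Delta / (lam1 + 2))" using l1 by simp
      also have "\<dots> \<le> P * (2 + lam1 + lam2) * (lam1 + 2) * K"
        using K P0 l1 l2 by (intro mult_left_mono) auto
      finally show ?thesis unfolding C2_def by (simp add: algebra_simps)
    qed
    have f1: "integral\<^sup>L M L \<le> log 2 (1 + C2 * P * K)"
    proof -
      have pm0: "0 < 1 + P * m" using P0 m0 by (simp add: add_pos_nonneg)
      have "log 2 c \<le> log 2 (1 + C2 * P * K)" unfolding c_def
        by (rule log_mono) (use Pm pm0 in linarith)+
      then show ?thesis using IL by simp
    qed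
    have f2: "log 2 (1 + C2 * P * K) \<le> C3 * P * K"
    proof -
      have x0: "C2 * P * K \<ge> 0" using C2p P0 K0 by simp
      have "ln (1 + C2 * P * K) \<le> C2 * P * K" using x0 by (intro ln_add_one_self_le_self)
      then have "ln (1 + C2 * P * K) / ln 2 \<le> C2 * P * K / ln 2" by (simp add: divide_right_mono)
      then show ?thesis unfolding C3_def log_def by simp
    qed
    show ?thesis
      using v1(1) v2(1) Li f1 f2
      unfolding Let_def T_def[symmetric] R1_def[symmetric] R2_def[symmetric] M_def[symmetric] L_def[symmetric] K_def
      by simp
  qed
  show ?thesis using C2p C3p main by blast
qed


end
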